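(* Let $(E,C)$ be a configuration structure. Then $C$ is closed under finitely compatible unions iff it is closed under bounded unions and under directed unions. Moreover, $C$ is coherent iff it is closed under bounded unions and weakly coherent.
   Context: $C\subseteq\mathcal{P}(E)$. A set $X$ is consistent if $X\subseteq z$ for some $z\in C$. Closed under bounded unions: $A\subseteq C$ with $\bigcup A$ consistent implies $\bigcup A\in C$. Closed under directed unions: every nonempty $A\subseteq C$ such that any $x,y\in A$ have $z\in A$ with $x\cup y\subseteq z$ satisfies $\bigcup A\in C$. Closed under finitely compatible unions: $A\subseteq C$ with $\bigcup F$ consistent for every finite $F\subseteq A$ implies $\bigcup A\in C$. Coherent: $A\subseteq C$ with $x\cup y$ consistent for all $x,y\in A$ implies $\bigcup A\in C$. Weakly coherent: every $A\subseteq C$ such that all $x,y\in A$ have $z\in C$ with $x\cup y\subseteq z\subseteq\bigcup A$ satisfies $\bigcup A\in C$. *)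

theory Defs
  imports Main
begin

definition configuration_structure :: "'a set \<Rightarrow> 'a set set \<Rightarrow> bool" where
  "configuration_structure E C \<longleftrightarrow> C \<subseteq> Pow E"

definition consistent :: "'a set set \<Rightarrow> 'a set \<Rightarrow> bool" where
  "consistent C X \<longleftrightarrow> (\<exists>z\<in>C. X \<subseteq> z)"

definition closed_bounded_unions :: "'a set set \<Rightarrow> bool" where
  "closed_bounded_unions C \<longleftrightarrow>
     (\<forall>A. A \<subseteq> C \<and> consistent C (\<Union>A) \<longrightarrow> \<Union>A \<in> C)"

definition closed_directed_unions :: "'a set set \<Rightarrow> bool" where
  "closed_directed_unions C \<longleftrightarrow>
     (\<forall>A. A \<subseteq> C \<and> A \<noteq> {} \<and> (\<forall>x\<in>A. \<forall>y\<in>A. \<exists>z\<in>A. x \<union> y \<subseteq> z) \<longrightarrow> \<Union>A \<in> C)"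

definition closed_fin_compat_unions :: "'a set set \<Rightarrow> bool" where
  "closed_fin_compat_unions C \<longleftrightarrow>
     (\<forall>A. A \<subseteq> C \<and> (\<forall>F. finite F \<and> F \<subseteq> A \<longrightarrow> consistent C (\<Union>F)) \<longrightarrow> \<Union>A \<in> C)"

definition coherent :: "'a set set \<Rightarrow> bool" where
  "coherent C \<longleftrightarrow>
     (\<forall>A. A \<subseteq> C \<and> (\<forall>x\<in>A. \<forall>y\<in>A. consistent C (x \<union> y)) \<longrightarrow> \<Union>A \<in> C)"

definition weakly_coherent :: "'a set set \<Rightarrow> bool" where
  "weakly_coherent C \<longleftrightarrow>
     (\<forall>A. A \<subseteq> C \<and> (\<forall>x\<in>A. \<forall>y\<in>A. \<exists>z\<in>C. x \<union> y \<subseteq> z \<and> z \<subseteq> \<Union>A) \<longrightarrow> \<Union>A \<in> C)"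

end

theory Submission
  imports Defs
begin

lemma dir_fin:
  assumes "finite F" "F \<subseteq> A" "A \<noteq> {}" "\<forall>x\<in>A. \<forall>y\<in>A. \<exists>z\<in>A. x \<union> y \<subseteq> z"
  shows "\<exists>z\<in>A. \<Union>F \<subseteq> z"
  using assms(1,2)
proof (induction F rule: finite_induct)
  case empty then show ?case using assms(3) by auto
next
  case (insert x F)
  then obtain z where "z \<in> A" "\<Union>F \<subseteq> z" by auto
  moreover have "x \<in> A" using insert by auto
  ultimately obtain w where "w \<in> A" "x \<union> z \<subseteq> w" using assms(4) by blast
  then show ?case using \<open>\<Union>F \<subseteq> z\<close> by auto
qed

lemma part1a:
  assumes "closed_fin_compat_unions C"
  shows "closed_bounded_unions C"
  unfolding closed_bounded_unions_def
proof (intro allI impI)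
  fix A assume h: "A \<subseteq> C \<and> consistent C (\<Union>A)"
  then obtain z where "z \<in> C" "\<Union>A \<subseteq> z" unfolding consistent_def by blast
  have "\<forall>F. finite F \<and> F \<subseteq> A \<longrightarrow> consistent C (\<Union>F)"
    using \<open>z \<in> C\<close> \<open>\<Union>A \<subseteq> z\<close> unfolding consistent_def by blast
  then show "\<Union>A \<in> C" using assms h unfolding closed_fin_compat_unions_def by blast
qed

lemma part1b:
  assumes "closed_fin_compat_unions C"
  shows "closed_directed_unions C"
  unfolding closed_directed_unions_def
proof (intro allI impI)
  fix A assume h: "A \<subseteq> C \<and> A \<noteq> {} \<and> (\<forall>x\<in>A. \<forall>y\<in>A. \<exists>z\<in>A. x \<union> y \<subseteq> z)"
  have "\<forall>F. finite F \<and> F \<subseteq> A \<longrightarrow> consistent C (\<Union>F)"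
  proof (intro allI impI)
    fix F assume "finite F \<and> F \<subseteq> A"
    then obtain z where "z \<in> A" "\<Union>F \<subseteq> z" using dir_fin[of F A] h by blast
    then show "consistent C (\<Union>F)" using h unfolding consistent_def by blast
  qed
  then show "\<Union>A \<in> C" using assms h unfolding closed_fin_compat_unions_def by blast
qed

lemma part1c:
  assumes b: "closed_bounded_unions C" and d: "closed_directed_unions C"
  shows "closed_fin_compat_unions C"
  unfolding closed_fin_compat_unions_def
proof (intro allI impI)
  fix A assume h: "A \<subseteq> C \<and> (\<forall>F. finite F \<and> F \<subseteq> A \<longrightarrow> consistent C (\<Union>F))"
  define D where "D = {\<Union>F | F. finite F \<and> F \<subseteq> A}"
  have DC: "D \<subseteq> C"
  proof
    fix u assume "u \<in> D"
    then obtain F where F: "u = \<Union>F" "finite F" "F \<subseteq> A" unfolding D_def by blast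
    then have "F \<subseteq> C" "consistent C (\<Union>F)" using h by auto
    then show "u \<in> C" using b F unfolding closed_bounded_unions_def by blast
  qed
  have "{} \<in> D" unfolding D_def by blast
  hence "D \<noteq> {}" by blast
  moreover have "\<forall>x\<in>D. \<forall>y\<in>D. \<exists>z\<in>D. x \<union> y \<subseteq> z"
  proof (intro ballI)
    fix x y assume "x \<in> D" "y \<in> D"
    then obtain F G where "x = \<Union>F" "finite F" "F \<subseteq> A" "y = \<Union>G" "finite G" "G \<subseteq> A"
      unfolding D_def by blast
    then have "\<Union>(F \<union> G) \<in> D" "x \<union> y \<subseteq> \<Union>(F \<union> G)" unfolding D_def
      by (blast, auto)
    then show "\<exists>z\<in>D. x \<union> y \<subseteq> z" by blast
  qed
  ultimately have "\<Union>D \<in> C" using d DC unfolding closed_directed_unions_def by blast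
  moreover have "\<Union>D = \<Union>A"
  proof
    show "\<Union>D \<subseteq> \<Union>A" unfolding D_def by blast
    show "\<Union>A \<subseteq> \<Union>D"
    proof
      fix e assume "e \<in> \<Union>A"
      then obtain a where "a \<in> A" "e \<in> a" by blast
      then have "\<Union>{a} \<in> D" unfolding D_def by blast
      then show "e \<in> \<Union>D" using \<open>e \<in> a\<close> by auto
    qed
  qed
  ultimately show "\<Union>A \<in> C" by simp
qed

lemma part2a:
  assumes "coherent C" shows "closed_bounded_unions C" "weakly_coherent C"
  using assms unfolding coherent_def closed_bounded_unions_def weakly_coherent_def consistent_def
  by (meson Sup_le_iff le_sup_iff order_trans)+

lemma part2b:
  assumes b: "closed_bounded_unions C" and w: "weakly_coherent C"
  shows "coherent C"
  unfolding coherent_def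
proof (intro allI impI)
  fix A assume h: "A \<subseteq> C \<and> (\<forall>x\<in>A. \<forall>y\<in>A. consistent C (x \<union> y))"
  have "\<forall>x\<in>A. \<forall>y\<in>A. \<exists>z\<in>C. x \<union> y \<subseteq> z \<and> z \<subseteq> \<Union>A"
  proof (intro ballI)
    fix x y assume xy: "x \<in> A" "y \<in> A"
    then have "{x,y} \<subseteq> C" "consistent C (\<Union>{x,y})" using h by auto
    then have "x \<union> y \<in> C" using b unfolding closed_bounded_unions_def by (metis Union_insert ccpo_Sup_singleton)
    then show "\<exists>z\<in>C. x \<union> y \<subseteq> z \<and> z \<subseteq> \<Union>A" using xy by blast
  qed
  then show "\<Union>A \<in> C" using w h unfolding weakly_coherent_def by blast
qed

theorem mainTheorem15:
  fixes E :: "'a set" and C :: "'a set set"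
  assumes "configuration_structure E C"
  shows "(closed_fin_compat_unions C \<longleftrightarrow>
            closed_bounded_unions C \<and> closed_directed_unions C)
       \<and> (coherent C \<longleftrightarrow> closed_bounded_unions C \<and> weakly_coherent C)"
  using part1a part1b part1c part2a part2b by blast

end
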